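(* Let $n\ge 2$ be an integer, $\tau,\gamma>0$, and $$F(\delta,\phi)=\tau\big[(n-2)(n+\delta)-2\phi(n-1)\delta\big]\big[(2-\delta)(n+\delta)+2\phi(n-1)\delta\big]-\gamma\delta(n+\delta)^{2}.$$ Let $\delta_0=\frac{2\tau(n-2)}{\gamma+\tau(n-2)}$. Then there is a unique smooth function $\delta(\phi)$ near $\phi=0$ with $\delta(0)=\delta_0$ and $F(\delta(\phi),\phi)=0$, and $$\delta(\phi)=\delta_0+\phi\,\frac{2\tau(n-1)\delta_{0}(n-4+\delta_{0})}{\gamma(n+3\delta_{0})+\tau(n-2)(n+3\delta_{0}-4)}+O(\phi^2).$$ Moreover, setting $\alpha(\phi)=(n-2)-(n-1)\phi\frac{2\delta(\phi)}{n+\delta(\phi)}$, $$\alpha(\phi)=(n-2)-\phi\,\frac{4\tau(n-1)(n-2)}{\tau(n+2)(n-2)+\gamma n}+O(\phi^2),$$ so the threshold $R^{cci}=\tau\alpha/\gamma$ satisfies $$R^{cci}=\frac{(n-2)\tau}{\gamma}-\phi\frac{\tau}{\gamma}\left(\frac{4\tau(n-1)(n-2)}{\tau(n+2)(n-2)+\gamma n}\right)+O(\phi^2).$$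
   Context: $F(\delta,\phi)=0$ characterises the non-trivial quasi-equilibrium of the fast variable $\delta=[II]/[I]$ in the pairwise SIR model on an $n$-regular network with clustering coefficient $\phi$ under the compact improved closure; the corresponding $\alpha=[SI]/[I]$ is given by $\alpha=(n-2)-(n-1)\phi\frac{2\delta}{n+\delta}$, and the epidemic threshold is $R^{cci}=\tau\alpha/\gamma$, with $\tau$ the per-link infection rate and $\gamma$ the recovery rate. *)

theory Defs
  imports "HOL-Analysis.Analysis" "HOL-Library.Landau_Symbols"
begin

definition Fcci :: "nat \<Rightarrow> real \<Rightarrow> real \<Rightarrow> real \<Rightarrow> real \<Rightarrow> real" where
  "Fcci n \<tau> \<gamma> \<delta> \<phi> =
     \<tau> * ((real n - 2) * (real n + \<delta>) - 2 * \<phi> * (real n - 1) * \<delta>)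
       * ((2 - \<delta>) * (real n + \<delta>) + 2 * \<phi> * (real n - 1) * \<delta>)
     - \<gamma> * \<delta> * (real n + \<delta>)^2"

definition delta0 :: "nat \<Rightarrow> real \<Rightarrow> real \<Rightarrow> real" where
  "delta0 n \<tau> \<gamma> = 2 * \<tau> * (real n - 2) / (\<gamma> + \<tau> * (real n - 2))"

text \<open>alpha = [SI]/[I] as a function of phi and delta.\<close>
definition alpha_cci :: "nat \<Rightarrow> real \<Rightarrow> real \<Rightarrow> real" where
  "alpha_cci n \<phi> \<delta> = (real n - 2) - (real n - 1) * \<phi> * (2 * \<delta> / (real n + \<delta>))"

text \<open>Smoothness (C-infinity) of a real function on a set S (intended: open S):
  there is a sequence of successive derivatives, all existing on S.\<close>
definition smooth_on :: "real set \<Rightarrow> (real \<Rightarrow> real) \<Rightarrow> bool" where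
  "smooth_on S f \<longleftrightarrow> (\<exists>D :: nat \<Rightarrow> real \<Rightarrow> real.
      (\<forall>x\<in>S. D 0 x = f x) \<and>
      (\<forall>k. \<forall>x\<in>S. (D k has_real_derivative D (Suc k) x) (at x)))"

end

theory Submission
  imports Defs
begin
definition PP :: "nat \<Rightarrow> real \<Rightarrow> real \<Rightarrow> real" where
 "PP n y x = (real n - 2) * (real n + y) - 2 * x * (real n - 1) * y"
definition QQ :: "nat \<Rightarrow> real \<Rightarrow> real \<Rightarrow> real" where
 "QQ n y x = (2 - y) * (real n + y) + 2 * x * (real n - 1) * y"
definition AA :: "nat \<Rightarrow> real \<Rightarrow> real \<Rightarrow> real \<Rightarrow> real \<Rightarrow> real \<Rightarrow> real" where
 "AA n \<tau> \<gamma> a b x = \<tau> * (PP n a x * ((2 - real n + 2*x*(real n - 1)) - (a+b))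
     + QQ n b x * ((real n - 2) - 2*x*(real n - 1)))
   - \<gamma> * (real n ^2 + 2*real n*(a+b) + a^2 + a*b + b^2)"
definition BB :: "nat \<Rightarrow> real \<Rightarrow> real \<Rightarrow> real \<Rightarrow> real \<Rightarrow> real \<Rightarrow> real" where
 "BB n \<tau> \<gamma> y x x' = \<tau> * (2*(real n - 1)*y) * ((real n - 2)*(real n + y) - (2-y)*(real n + y) - 2*(real n - 1)*y*(x + x'))"

lemma F_diff_y: "Fcci n \<tau> \<gamma> a x - Fcci n \<tau> \<gamma> b x = (a - b) * AA n \<tau> \<gamma> a b x"
  unfolding Fcci_def AA_def PP_def QQ_def by (simp add: algebra_simps power2_eq_square)
lemma F_diff_x: "Fcci n \<tau> \<gamma> y x' - Fcci n \<tau> \<gamma> y x = (x' - x) * BB n \<tau> \<gamma> y x x'"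
  unfolding Fcci_def BB_def by (simp add: algebra_simps power2_eq_square)


datatype ex = Xv | Yv | Cst real | Add ex ex | Mul ex ex | Iv

primrec ev :: "(real \<Rightarrow> real \<Rightarrow> real) \<Rightarrow> real \<Rightarrow> real \<Rightarrow> ex \<Rightarrow> real" where
  "ev g x y Xv = x"
| "ev g x y Yv = y"
| "ev g x y (Cst c) = c"
| "ev g x y (Add a b) = ev g x y a + ev g x y b"
| "ev g x y (Mul a b) = ev g x y a * ev g x y b"
| "ev g x y Iv = 1 / g x y"

primrec dd :: "ex \<Rightarrow> ex \<Rightarrow> ex \<Rightarrow> ex" where
  "dd r da Xv = Cst 1"
| "dd r da Yv = r"
| "dd r da (Cst c) = Cst 0"
| "dd r da (Add a b) = Add (dd r da a) (dd r da b)"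
| "dd r da (Mul a b) = Add (Mul (dd r da a) b) (Mul a (dd r da b))"
| "dd r da Iv = Mul (Cst (-1)) (Mul da (Mul Iv Iv))"

primrec nofI :: "ex \<Rightarrow> bool" where
  "nofI Xv = True" | "nofI Yv = True" | "nofI (Cst c) = True"
| "nofI (Add a b) = (nofI a \<and> nofI b)" | "nofI (Mul a b) = (nofI a \<and> nofI b)"
| "nofI Iv = False"

lemma dd_deriv_gen:
  assumes hf: "(f has_real_derivative ev g x (f x) r) (at x)"
    and hI: "((\<lambda>t. 1 / g t (f t)) has_real_derivative ev g x (f x) (dd r da Iv)) (at x)"
  shows "((\<lambda>t. ev g t (f t) e) has_real_derivative ev g x (f x) (dd r da e)) (at x)"
proof (induction e)
  case Xv then show ?case by (simp add: DERIV_ident)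
next
  case Yv then show ?case using hf by simp
next
  case (Cst c) then show ?case by simp
next
  case (Add a b) then show ?case by (simp add: DERIV_add)
next
  case (Mul a b) then show ?case using DERIV_mult[OF Mul.IH] by (simp add: algebra_simps)
next
  case Iv then show ?case using hI by simp
qed

lemma dd_deriv_nofI:
  assumes hf: "(f has_real_derivative ev g x (f x) r) (at x)" and "nofI e"
  shows "((\<lambda>t. ev g t (f t) e) has_real_derivative ev g x (f x) (dd r da e)) (at x)"
  using assms(2)
proof (induction e)
  case Xv then show ?case by (simp add: DERIV_ident)
next
  case Yv then show ?case using hf by simp
next
  case (Cst c) then show ?case by simp
next
  case (Add a b) then show ?case by (simp add: DERIV_add)
next
  case (Mul a b)
  then have "nofI a" "nofI b" by simp_all
  with Mul.IH have "((\<lambda>t. ev g t (f t) a) has_real_derivative ev g x (f x) (dd r da a)) (at x)"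
     "((\<lambda>t. ev g t (f t) b) has_real_derivative ev g x (f x) (dd r da b)) (at x)" by blast+
  from DERIV_mult[OF this] show ?case by (simp add: algebra_simps)
next
  case Iv then show ?case by simp
qed

lemma dd_deriv:
  assumes hf: "(f has_real_derivative ev g x (f x) r) (at x)" and "nofI A"
    and hA: "\<And>t y. ev g t y A = g t y" and nz: "g x (f x) \<noteq> 0"
  shows "((\<lambda>t. ev g t (f t) e) has_real_derivative ev g x (f x) (dd r (dd r (Cst 0) A) e)) (at x)"
proof (rule dd_deriv_gen[OF hf])
  have d: "((\<lambda>t. g t (f t)) has_real_derivative ev g x (f x) (dd r (Cst 0) A)) (at x)"
    using dd_deriv_nofI[OF hf assms(2), where da="Cst 0"] by (simp only: hA)
  have "((\<lambda>t. inverse (g t (f t))) has_real_derivative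
      - (ev g x (f x) (dd r (Cst 0) A) * inverse (g x (f x) ^ Suc (Suc 0)))) (at x)"
    by (rule DERIV_inverse_fun[OF d nz])
  moreover have "(\<lambda>t. 1 / g t (f t)) = (\<lambda>t. inverse (g t (f t)))" by (simp add: divide_inverse)
  moreover have "ev g x (f x) (dd r (dd r (Cst 0) A) Iv) = - (ev g x (f x) (dd r (Cst 0) A) * inverse (g x (f x) ^ Suc (Suc 0)))"
    by (simp add: divide_inverse power2_eq_square)
  ultimately show "((\<lambda>t. 1 / g t (f t)) has_real_derivative ev g x (f x) (dd r (dd r (Cst 0) A) Iv)) (at x)"
    by simp
qed

lemma smooth_from_ode:
  assumes "nofI A" and hA: "\<And>t y. ev g t y A = g t y"
    and hf: "\<And>x. x \<in> S \<Longrightarrow> (f has_real_derivative ev g x (f x) r) (at x)"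
    and nz: "\<And>x. x \<in> S \<Longrightarrow> g x (f x) \<noteq> 0"
  shows "smooth_on S f"
  unfolding smooth_on_def
proof (intro exI[of _ "\<lambda>k x. ev g x (f x) ((dd r (dd r (Cst 0) A) ^^ k) Yv)"] conjI ballI allI)
  fix x assume "x \<in> S" show "ev g x (f x) ((dd r (dd r (Cst 0) A) ^^ 0) Yv) = f x" by simp
next
  fix k x assume "x \<in> S"
  show "((\<lambda>x. ev g x (f x) ((dd r (dd r (Cst 0) A) ^^ k) Yv)) has_real_derivative
     ev g x (f x) ((dd r (dd r (Cst 0) A) ^^ Suc k) Yv)) (at x)"
    using dd_deriv[OF hf[OF \<open>x\<in>S\<close>] assms(1) hA nz[OF \<open>x\<in>S\<close>], of "(dd r (dd r (Cst 0) A) ^^ k) Yv"]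
    by (simp only: funpow.simps comp_def)
qed


lemma d0_facts:
  fixes n :: nat and \<tau> \<gamma> :: real
  assumes n: "n \<ge> 2" and t: "\<tau> > 0" and g: "\<gamma> > 0"
  defines "d0 \<equiv> delta0 n \<tau> \<gamma>" and "S \<equiv> \<gamma> + \<tau> * (real n - 2)"
  shows "S > 0" "0 \<le> d0" "d0 * S = 2 * \<tau> * (real n - 2)"
    "Fcci n \<tau> \<gamma> d0 0 = 0"
    "AA n \<tau> \<gamma> d0 d0 0 = - ((real n + d0)^2 * S)"
    "\<gamma> * (real n + 3 * d0) + \<tau> * (real n - 2) * (real n + 3 * d0 - 4) = (real n + d0) * S"
    "BB n \<tau> \<gamma> d0 0 0 = 2 * \<tau> * (real n - 1) * d0 * (real n + d0) * (real n - 4 + d0)"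
    "4 * \<tau> * (real n - 1) * (real n - 2) / (\<tau> * (real n + 2) * (real n - 2) + \<gamma> * real n)
      = 2 * (real n - 1) * d0 / (real n + d0)"
proof -
  have N: "real n \<ge> 2" using n by simp
  show S: "S > 0" unfolding S_def using t g N by (smt (verit) mult_nonneg_nonneg)
  show d0: "0 \<le> d0" unfolding d0_def delta0_def using t S N S_def by simp
  show dS: "d0 * S = 2 * \<tau> * (real n - 2)" unfolding d0_def delta0_def S_def using S S_def by simp
  have h: "\<tau> * (real n - 2) * (2 - d0) = \<gamma> * d0" using dS unfolding S_def by (simp add: algebra_simps)
  show "Fcci n \<tau> \<gamma> d0 0 = 0"
  proof -
    have "Fcci n \<tau> \<gamma> d0 0 = (real n + d0)^2 * (\<tau> * (real n - 2) * (2 - d0) - \<gamma> * d0)"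
      unfolding Fcci_def by (simp add: algebra_simps power2_eq_square)
    then show ?thesis using h by simp
  qed
  have den: "\<gamma> * (real n + 3 * d0) + \<tau> * (real n - 2) * (real n + 3 * d0 - 4) = (real n + d0) * S"
    using h unfolding S_def by (simp add: algebra_simps)
  show "\<gamma> * (real n + 3 * d0) + \<tau> * (real n - 2) * (real n + 3 * d0 - 4) = (real n + d0) * S" by (rule den)
  have "AA n \<tau> \<gamma> d0 d0 0 = - (real n + d0) * (\<gamma> * (real n + 3 * d0) + \<tau> * (real n - 2) * (real n + 3 * d0 - 4))"
    unfolding AA_def PP_def QQ_def by (simp add: algebra_simps power2_eq_square)
  also have "\<dots> = - (real n + d0) * ((real n + d0) * S)" by (simp only: den)
  finally show "AA n \<tau> \<gamma> d0 d0 0 = - ((real n + d0)^2 * S)" by (simp only: power2_eq_square)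
  show "BB n \<tau> \<gamma> d0 0 0 = 2 * \<tau> * (real n - 1) * d0 * (real n + d0) * (real n - 4 + d0)"
    unfolding BB_def by (simp add: algebra_simps)
  have p1: "\<tau> * (real n + 2) * (real n - 2) + \<gamma> * real n > 0" using t g N
    by (smt (verit) mult_nonneg_nonneg mult_pos_pos)
  have p2: "real n + d0 > 0" using d0 N by simp
  have e: "(\<tau> * (real n + 2) * (real n - 2) + \<gamma> * real n) * d0 = 2 * \<tau> * (real n - 2) * (real n + d0)"
  proof -
    have "(\<tau> * (real n + 2) * (real n - 2) + \<gamma> * real n) * d0 = real n * (d0 * S) + 2 * \<tau> * (real n - 2) * d0"
      unfolding S_def by (simp add: algebra_simps)
    also have "\<dots> = 2 * \<tau> * (real n - 2) * (real n + d0)" using arg_cong[OF dS, of "\<lambda>z. real n * z"] by (simp add: algebra_simps)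
    finally show ?thesis .
  qed
  show "4 * \<tau> * (real n - 1) * (real n - 2) / (\<tau> * (real n + 2) * (real n - 2) + \<gamma> * real n)
      = 2 * (real n - 1) * d0 / (real n + d0)"
  proof (subst frac_eq_eq)
    show "\<tau> * (real n + 2) * (real n - 2) + \<gamma> * real n \<noteq> 0" "real n + d0 \<noteq> 0" using p1 p2 by auto
    have "2 * (real n - 1) * d0 * (\<tau> * (real n + 2) * (real n - 2) + \<gamma> * real n)
       = 2 * (real n - 1) * ((\<tau> * (real n + 2) * (real n - 2) + \<gamma> * real n) * d0)" by (simp only: ac_simps)
    also have "\<dots> = 4 * \<tau> * (real n - 1) * (real n - 2) * (real n + d0)" unfolding e by (simp add: algebra_simps)
    finally show "4 * \<tau> * (real n - 1) * (real n - 2) * (real n + d0) =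
      2 * (real n - 1) * d0 * (\<tau> * (real n + 2) * (real n - 2) + \<gamma> * real n)" by simp
  qed
qed

definition sube :: "ex \<Rightarrow> ex \<Rightarrow> ex" where "sube a b = Add a (Mul (Cst (-1)) b)"

definition Ad :: "nat \<Rightarrow> real \<Rightarrow> real \<Rightarrow> real \<Rightarrow> real \<Rightarrow> real" where
  "Ad n \<tau> \<gamma> x y = AA n \<tau> \<gamma> y y x"

definition PPe :: "nat \<Rightarrow> ex" where
  "PPe n = sube (Mul (Cst (real n - 2)) (Add (Cst (real n)) Yv)) (Mul (Cst (2 * (real n - 1))) (Mul Xv Yv))"
definition QQe :: "nat \<Rightarrow> ex" where
  "QQe n = Add (Mul (sube (Cst 2) Yv) (Add (Cst (real n)) Yv)) (Mul (Cst (2 * (real n - 1))) (Mul Xv Yv))"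
definition AdE :: "nat \<Rightarrow> real \<Rightarrow> real \<Rightarrow> ex" where
  "AdE n \<tau> \<gamma> = sube (Mul (Cst \<tau>) (Add (Mul (PPe n) (sube (Add (Cst (2 - real n)) (Mul (Cst (2 * (real n - 1))) Xv)) (Mul (Cst 2) Yv)))
        (Mul (QQe n) (sube (Cst (real n - 2)) (Mul (Cst (2 * (real n - 1))) Xv)))))
     (Mul (Cst \<gamma>) (Add (Cst (real n ^ 2)) (Add (Mul (Cst (4 * real n)) Yv) (Mul (Cst 3) (Mul Yv Yv)))))"
definition BdE :: "nat \<Rightarrow> real \<Rightarrow> ex" where
  "BdE n \<tau> = Mul (Cst (\<tau> * 2 * (real n - 1))) (Mul Yv (sube (sube (Mul (Cst (real n - 2)) (Add (Cst (real n)) Yv))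
      (Mul (sube (Cst 2) Yv) (Add (Cst (real n)) Yv))) (Mul (Cst (4 * (real n - 1))) (Mul Yv Xv))))"
definition RE :: "nat \<Rightarrow> real \<Rightarrow> ex" where
  "RE n \<tau> = Mul (Cst (-1)) (Mul (BdE n \<tau>) Iv)"

lemma nofI_AdE: "nofI (AdE n \<tau> \<gamma>)"
  unfolding AdE_def PPe_def QQe_def sube_def by simp

lemma ev_AdE: "ev g x y (AdE n \<tau> \<gamma>) = Ad n \<tau> \<gamma> x y"
  unfolding AdE_def PPe_def QQe_def sube_def Ad_def AA_def PP_def QQ_def
  by (simp add: algebra_simps power2_eq_square)

lemma ev_BdE: "ev g x y (BdE n \<tau>) = BB n \<tau> \<gamma> y x x"
  unfolding BdE_def sube_def BB_def by (simp add: algebra_simps)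

lemma ev_RE: "ev (Ad n \<tau> \<gamma>) x y (RE n \<tau>) = - BB n \<tau> \<gamma> y x x / AA n \<tau> \<gamma> y y x"
  unfolding RE_def by (simp add: ev_BdE[where \<gamma>=\<gamma>] Ad_def)


lemma dist3_le: "dist ((a::real), (b::real), (c::real)) (a', b', c') \<le> \<bar>a - a'\<bar> + \<bar>b - b'\<bar> + \<bar>c - c'\<bar>"
proof -
  have "dist (b, c) (b', c') \<le> \<bar>b - b'\<bar> + \<bar>c - c'\<bar>"
    using sqrt_sum_squares_le_sum_abs[of "b - b'" "c - c'"] by (simp add: dist_Pair_Pair dist_real_def)
  moreover have "dist (a, b, c) (a', b', c') \<le> \<bar>a - a'\<bar> + \<bar>dist (b, c) (b', c')\<bar>"
    using sqrt_sum_squares_le_sum_abs[of "a - a'" "dist (b, c) (b', c')"]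
    by (simp add: dist_Pair_Pair[of a "(b,c)"] dist_real_def)
  ultimately show ?thesis by simp
qed

lemma box_exists:
  fixes n :: nat and \<tau> \<gamma> d0 a0 :: real
  assumes "AA n \<tau> \<gamma> d0 d0 0 = - a0" "a0 > 0"
  shows "\<exists>\<rho>>0. \<rho> \<le> 1 \<and> (\<forall>a b x. \<bar>a - d0\<bar> < \<rho> \<longrightarrow> \<bar>b - d0\<bar> < \<rho> \<longrightarrow> \<bar>x\<bar> < \<rho> \<longrightarrow> AA n \<tau> \<gamma> a b x < - a0 / 2)"
proof -
  let ?h = "\<lambda>z::real\<times>real\<times>real. AA n \<tau> \<gamma> (fst z) (fst (snd z)) (snd (snd z))"
  have "continuous (at (d0, d0, 0)) ?h"
    unfolding AA_def PP_def QQ_def by (intro continuous_intros)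
  then obtain d where d: "d > 0" and hd: "\<And>z. dist z (d0, d0, 0) < d \<Longrightarrow> dist (?h z) (?h (d0, d0, 0)) < a0 / 2"
    unfolding continuous_at_eps_delta using assms(2) by (metis half_gt_zero)
  show ?thesis
  proof (intro exI[of _ "min 1 (d/3)"] conjI allI impI)
    fix a b x assume h: "\<bar>a - d0\<bar> < min 1 (d/3)" "\<bar>b - d0\<bar> < min 1 (d/3)" "\<bar>x\<bar> < min 1 (d/3)"
    have "dist (a, b, x) (d0, d0, 0) < d" using dist3_le[of a b x d0 d0 0] h by simp
    from hd[OF this] assms(1) show "AA n \<tau> \<gamma> a b x < - a0 / 2" by (simp add: dist_real_def) (cases "AA n \<tau> \<gamma> a b x + a0 \<ge> 0"; auto)
  qed (use d in auto)
qed


lemma frac_diff_bound: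
  fixes N d0 y x L :: real
  assumes "N \<ge> 2" "\<bar>y - d0\<bar> \<le> L * \<bar>x\<bar>" "1 \<le> N + y" "1 \<le> N + d0"
  shows "\<bar>x * (2 * (N - 1) * d0 / (N + d0) - 2 * (N - 1) * y / (N + y))\<bar> \<le> 2 * (N - 1) * N * L * x^2"
proof -
  have e: "2 * (N - 1) * d0 / (N + d0) - 2 * (N - 1) * y / (N + y) = 2 * (N - 1) * N * (d0 - y) / ((N + d0) * (N + y))"
    using assms by (simp add: field_simps)
  have "\<bar>2 * (N - 1) * N * (d0 - y) / ((N + d0) * (N + y))\<bar> = 2 * (N - 1) * N * \<bar>d0 - y\<bar> / ((N + d0) * (N + y))"
    using assms by (simp add: abs_mult)
  also have "\<dots> \<le> 2 * (N - 1) * N * \<bar>d0 - y\<bar> / 1"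
  proof (rule divide_left_mono)
    show "1 \<le> (N + d0) * (N + y)" using assms by (metis mult_mono' mult_1 order_trans zero_le_one)
  qed (use assms in auto)
  also have "\<dots> \<le> 2 * (N - 1) * N * (L * \<bar>x\<bar>)" using assms by (simp add: abs_minus_commute)
  finally have "\<bar>2 * (N - 1) * d0 / (N + d0) - 2 * (N - 1) * y / (N + y)\<bar> \<le> 2 * (N - 1) * N * (L * \<bar>x\<bar>)"
    using e by simp
  then have "\<bar>x\<bar> * \<bar>2 * (N - 1) * d0 / (N + d0) - 2 * (N - 1) * y / (N + y)\<bar> \<le> \<bar>x\<bar> * (2 * (N - 1) * N * (L * \<bar>x\<bar>))"
    by (simp add: mult_left_mono)
  moreover have "\<bar>x\<bar> * (2 * (N - 1) * N * (L * \<bar>x\<bar>)) = 2 * (N - 1) * N * L * (\<bar>x\<bar> * \<bar>x\<bar>)"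
    by (simp only: ac_simps)
  ultimately show ?thesis by (simp only: abs_mult[symmetric] abs_mult_self_eq power2_eq_square) (simp only: abs_mult abs_mult_self_eq)
qed


theorem mainTheorem8:
  fixes n :: nat and \<tau> \<gamma> :: real
  assumes "n \<ge> 2" and "\<tau> > 0" and "\<gamma> > 0"
  shows "\<exists>\<epsilon>>0. \<exists>\<delta> :: real \<Rightarrow> real.
     smooth_on (ball 0 \<epsilon>) \<delta> \<and>
     \<delta> 0 = delta0 n \<tau> \<gamma> \<and>
     (\<forall>\<phi>\<in>ball 0 \<epsilon>. Fcci n \<tau> \<gamma> (\<delta> \<phi>) \<phi> = 0) \<and>
     (\<forall>\<epsilon>'>0. \<forall>\<delta>' :: real \<Rightarrow> real.
        smooth_on (ball 0 \<epsilon>') \<delta>' \<and> \<delta>' 0 = delta0 n \<tau> \<gamma> \<and>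
        (\<forall>\<phi>\<in>ball 0 \<epsilon>'. Fcci n \<tau> \<gamma> (\<delta>' \<phi>) \<phi> = 0)
        \<longrightarrow> (\<forall>\<^sub>F \<phi> in nhds 0. \<delta>' \<phi> = \<delta> \<phi>)) \<and>
     (let d0 = delta0 n \<tau> \<gamma> in
       (\<lambda>\<phi>. \<delta> \<phi> - (d0 + \<phi> * (2 * \<tau> * (real n - 1) * d0 * (real n - 4 + d0)
              / (\<gamma> * (real n + 3 * d0) + \<tau> * (real n - 2) * (real n + 3 * d0 - 4)))))
         \<in> O[nhds 0](\<lambda>\<phi>. \<phi>^2)) \<and>
     (\<lambda>\<phi>. alpha_cci n \<phi> (\<delta> \<phi>) - ((real n - 2) - \<phi> * (4 * \<tau> * (real n - 1) * (real n - 2)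
              / (\<tau> * (real n + 2) * (real n - 2) + \<gamma> * real n))))
         \<in> O[nhds 0](\<lambda>\<phi>. \<phi>^2) \<and>
     (\<lambda>\<phi>. \<tau> * alpha_cci n \<phi> (\<delta> \<phi>) / \<gamma> - ((real n - 2) * \<tau> / \<gamma>
              - \<phi> * (\<tau> / \<gamma>) * (4 * \<tau> * (real n - 1) * (real n - 2)
              / (\<tau> * (real n + 2) * (real n - 2) + \<gamma> * real n))))
         \<in> O[nhds 0](\<lambda>\<phi>. \<phi>^2)"
proof -
  define N where "N = real n"
  define d0 where "d0 = delta0 n \<tau> \<gamma>"
  define S where "S = \<gamma> + \<tau> * (real n - 2)"
  define a0 where "a0 = (real n + d0)^2 * S"
  define F where "F = Fcci n \<tau> \<gamma>"
  define A where "A = AA n \<tau> \<gamma>"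
  define B where "B = BB n \<tau> \<gamma>"
  note fac = d0_facts[OF assms, folded d0_def S_def]
  have N2: "real n \<ge> 2" using assms(1) by simp
  have Spos: "S > 0" and d0nn: "0 \<le> d0" and F0: "F d0 0 = 0" and A0: "A d0 d0 0 = - a0"
    using fac unfolding F_def A_def a0_def by auto
  have a0pos: "a0 > 0" unfolding a0_def using Spos d0nn N2 by simp
  obtain \<rho> where \<rho>: "\<rho> > 0" "\<rho> \<le> 1"
    and box: "\<And>a b x. \<bar>a - d0\<bar> < \<rho> \<Longrightarrow> \<bar>b - d0\<bar> < \<rho> \<Longrightarrow> \<bar>x\<bar> < \<rho> \<Longrightarrow> A a b x < - a0 / 2"
    using box_exists[of n \<tau> \<gamma> d0 a0] A0 a0pos unfolding A_def by blast
  define r where "r = \<rho> / 2"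
  have r: "r > 0" "r < \<rho>" "r \<le> 1/2" using \<rho> unfolding r_def by auto
  have Fdy: "\<And>a b x. F a x - F b x = (a - b) * A a b x" unfolding F_def A_def by (rule F_diff_y)
  have Fdx: "\<And>y x x'. F y x' - F y x = (x' - x) * B y x x'" unfolding F_def B_def by (rule F_diff_x)
  have Fp0: "F (d0 + r) 0 < 0"
  proof -
    have "A (d0 + r) d0 0 < 0" using box[of "d0 + r" d0 0] r \<rho> a0pos by simp
    then show ?thesis using Fdy[of "d0 + r" 0 d0] F0 r by (simp add: mult_pos_neg)
  qed
  have Fm0: "F (d0 - r) 0 > 0"
  proof -
    have "A (d0 - r) d0 0 < 0" using box[of "d0 - r" d0 0] r \<rho> a0pos by simp
    then show ?thesis using Fdy[of "d0 - r" 0 d0] F0 r by (simp add: mult_pos_neg)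
  qed
  have contx: "\<And>y. isCont (\<lambda>x. F y x) x0" for x0
    unfolding F_def Fcci_def by (intro continuous_intros)
  have conty: "\<And>x. isCont (\<lambda>y. F y x) y0" for y0
    unfolding F_def Fcci_def by (intro continuous_intros)
  obtain e1 where e1: "e1 > 0" "\<And>x. \<bar>x\<bar> < e1 \<Longrightarrow> F (d0 + r) x < 0"
  proof -
    have "((\<lambda>x. F (d0 + r) x) \<longlongrightarrow> F (d0 + r) 0) (at 0)" using contx isCont_def by blast
    then obtain s where "s > 0" "\<And>x. x \<noteq> 0 \<Longrightarrow> norm (x - 0) < s \<Longrightarrow> norm (F (d0 + r) x - F (d0 + r) 0) < - F (d0 + r) 0"
      unfolding LIM_eq using Fp0 by (metis neg_0_less_iff_less)
    then show ?thesis using Fp0 by (intro that[of s]) (auto, smt (verit))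
  qed
  obtain e2 where e2: "e2 > 0" "\<And>x. \<bar>x\<bar> < e2 \<Longrightarrow> F (d0 - r) x > 0"
  proof -
    have "((\<lambda>x. F (d0 - r) x) \<longlongrightarrow> F (d0 - r) 0) (at 0)" using contx isCont_def by blast
    then obtain s where "s > 0" "\<And>x. x \<noteq> 0 \<Longrightarrow> norm (x - 0) < s \<Longrightarrow> norm (F (d0 - r) x - F (d0 - r) 0) < F (d0 - r) 0"
      unfolding LIM_eq using Fm0 by metis
    then show ?thesis using Fm0 by (intro that[of s]) (auto, smt (verit))
  qed
  define \<epsilon> where "\<epsilon> = min \<rho> (min e1 e2)"
  have \<epsilon>: "\<epsilon> > 0" "\<epsilon> \<le> \<rho>" "\<epsilon> \<le> e1" "\<epsilon> \<le> e2" using \<rho> e1 e2 unfolding \<epsilon>_def by auto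
  define R where "R = (\<lambda>x y. \<bar>y - d0\<bar> \<le> r \<and> F y x = 0)"
  have exR: "\<exists>y. R x y" if x: "\<bar>x\<bar> < \<epsilon>" for x
  proof -
    have "\<exists>y. d0 - r \<le> y \<and> y \<le> d0 + r \<and> F y x = 0"
      by (rule IVT2) (use e1(2)[of x] e2(2)[of x] x \<epsilon> r conty in auto)
    then show ?thesis unfolding R_def by (metis abs_diff_le_iff)
  qed
  have Aneg: "A a b x \<le> - a0 / 2" if "\<bar>a - d0\<bar> \<le> r" "\<bar>b - d0\<bar> \<le> r" "\<bar>x\<bar> < \<epsilon>" for a b x
    using box[of a b x] that r \<epsilon> by auto
  have uR: "y1 = y2" if "\<bar>x\<bar> < \<epsilon>" "R x y1" "R x y2" for x y1 y2
  proof -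
    have "(y1 - y2) * A y1 y2 x = 0" using Fdy[of y1 x y2] that unfolding R_def by simp
    moreover have "A y1 y2 x \<noteq> 0" using Aneg[of y1 y2 x] that a0pos unfolding R_def by auto
    ultimately show ?thesis by simp
  qed
  define \<delta> where "\<delta> = (\<lambda>x. THE y. R x y)"
  have dR: "R x (\<delta> x)" if "\<bar>x\<bar> < \<epsilon>" for x
    unfolding \<delta>_def using exR[OF that] uR[OF that] by (metis theI)
  have dF: "F (\<delta> x) x = 0" and dr: "\<bar>\<delta> x - d0\<bar> \<le> r" if "\<bar>x\<bar> < \<epsilon>" for x
    using dR[OF that] unfolding R_def by auto
  have d00: "\<delta> 0 = d0"
    using uR[of 0 "\<delta> 0" d0] dR[of 0] \<epsilon> F0 r unfolding R_def by auto
  have key: "(\<delta> x' - \<delta> x) * A (\<delta> x') (\<delta> x) x' = - ((x' - x) * B (\<delta> x) x x')"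
    if "\<bar>x\<bar> < \<epsilon>" "\<bar>x'\<bar> < \<epsilon>" for x x'
    using Fdy[of "\<delta> x'" x' "\<delta> x"] Fdx[of "\<delta> x" x' x] dF[OF that(1)] dF[OF that(2)] by simp
  have quot: "\<delta> x' - \<delta> x = - ((x' - x) * B (\<delta> x) x x') / A (\<delta> x') (\<delta> x) x'"
    if "\<bar>x\<bar> < \<epsilon>" "\<bar>x'\<bar> < \<epsilon>" for x x'
  proof -
    have "A (\<delta> x') (\<delta> x) x' \<noteq> 0" using Aneg[OF dr[OF that(2)] dr[OF that(1)] that(2)] a0pos by auto
    then show ?thesis using key[OF that] by (simp add: field_simps)
  qed
  have ev_ball: "\<forall>\<^sub>F x' in at x. \<bar>x'\<bar> < \<epsilon>" if "\<bar>x\<bar> < \<epsilon>" for x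
    unfolding eventually_at
    by (rule exI[of _ "\<epsilon> - \<bar>x\<bar>"]) (use that in \<open>auto simp: dist_real_def\<close>)
  have dcont: "(\<delta> \<longlongrightarrow> \<delta> x) (at x)" if x: "\<bar>x\<bar> < \<epsilon>" for x
  proof -
    have "((\<lambda>x'. \<delta> x' - \<delta> x) \<longlongrightarrow> 0) (at x)"
    proof (rule Lim_null_comparison)
      show "\<forall>\<^sub>F x' in at x. norm (\<delta> x' - \<delta> x) \<le> \<bar>x' - x\<bar> * \<bar>B (\<delta> x) x x'\<bar> / (a0 / 2)"
        using ev_ball[OF x]
      proof eventually_elim
        case (elim x')
        have Ale: "a0 / 2 \<le> \<bar>A (\<delta> x') (\<delta> x) x'\<bar>"
          using Aneg[OF dr[OF elim] dr[OF x] elim] by simp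
        have "norm (\<delta> x' - \<delta> x) = \<bar>x' - x\<bar> * \<bar>B (\<delta> x) x x'\<bar> / \<bar>A (\<delta> x') (\<delta> x) x'\<bar>"
          using quot[OF x elim] by (simp add: abs_mult)
        also have "\<dots> \<le> \<bar>x' - x\<bar> * \<bar>B (\<delta> x) x x'\<bar> / (a0 / 2)"
          by (rule divide_left_mono) (use Ale a0pos in auto)
        finally show ?case .
      qed
      have "((\<lambda>x'. \<bar>x' - x\<bar> * \<bar>B (\<delta> x) x x'\<bar> / (a0 / 2)) \<longlongrightarrow> \<bar>x - x\<bar> * \<bar>B (\<delta> x) x x\<bar> / (a0 / 2)) (at x)"
        unfolding B_def BB_def using a0pos by (intro tendsto_intros) auto
      then show "((\<lambda>x'. \<bar>x' - x\<bar> * \<bar>B (\<delta> x) x x'\<bar> / (a0 / 2)) \<longlongrightarrow> 0) (at x)" by simp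
    qed
    then show ?thesis by (simp add: LIM_zero_iff)
  qed
  have dderiv: "(\<delta> has_real_derivative - B (\<delta> x) x x / A (\<delta> x) (\<delta> x) x) (at x)" if x: "\<bar>x\<bar> < \<epsilon>" for x
  proof -
    have Anz: "A (\<delta> x) (\<delta> x) x \<noteq> 0" using Aneg[OF dr[OF x] dr[OF x] x] a0pos by auto
    have lim: "((\<lambda>x'. - B (\<delta> x) x x' / A (\<delta> x') (\<delta> x) x') \<longlongrightarrow> - B (\<delta> x) x x / A (\<delta> x) (\<delta> x) x) (at x)"
      unfolding A_def AA_def PP_def QQ_def B_def BB_def
      using Anz[unfolded A_def AA_def PP_def QQ_def] dcont[OF x]
      by (intro tendsto_intros) auto
    have "\<forall>\<^sub>F x' in at x. - B (\<delta> x) x x' / A (\<delta> x') (\<delta> x) x' = (\<delta> x' - \<delta> x) / (x' - x)"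
    proof -
      have "\<forall>\<^sub>F x' in at x. x' \<noteq> x" by (simp add: eventually_at_filter)
      with ev_ball[OF x] show ?thesis
      proof eventually_elim
        case (elim x')
        have q: "\<delta> x' - \<delta> x = - ((x' - x) * B (\<delta> x) x x') / A (\<delta> x') (\<delta> x) x'"
          using quot[OF x elim(1)] .
        have "(\<delta> x' - \<delta> x) / (x' - x) = (- ((x' - x) * B (\<delta> x) x x') / A (\<delta> x') (\<delta> x) x') / (x' - x)"
          unfolding q ..
        also have "\<dots> = - B (\<delta> x) x x' / A (\<delta> x') (\<delta> x) x'" using elim(2) by (cases "A (\<delta> x') (\<delta> x) x' = 0") (simp_all add: field_simps)
        finally show ?case by simp
      qed
    qed
    then have "((\<lambda>x'. (\<delta> x' - \<delta> x) / (x' - x)) \<longlongrightarrow> - B (\<delta> x) x x / A (\<delta> x) (\<delta> x) x) (at x)"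
      using lim tendsto_cong by force
    then show ?thesis by (simp add: has_field_derivative_iff)
  qed
  have smooth: "smooth_on (ball 0 \<epsilon>) \<delta>"
  proof (rule smooth_from_ode[where A="AdE n \<tau> \<gamma>" and g="Ad n \<tau> \<gamma>" and r="RE n \<tau>"])
    show "nofI (AdE n \<tau> \<gamma>)" by (rule nofI_AdE)
    show "\<And>t y. ev (Ad n \<tau> \<gamma>) t y (AdE n \<tau> \<gamma>) = Ad n \<tau> \<gamma> t y" by (rule ev_AdE)
    fix x assume "x \<in> ball (0::real) \<epsilon>"
    then have x: "\<bar>x\<bar> < \<epsilon>" by simp
    show "(\<delta> has_real_derivative ev (Ad n \<tau> \<gamma>) x (\<delta> x) (RE n \<tau>)) (at x)"
      using dderiv[OF x] unfolding ev_RE A_def B_def .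
    show "Ad n \<tau> \<gamma> x (\<delta> x) \<noteq> 0" using Aneg[OF dr[OF x] dr[OF x] x] a0pos unfolding Ad_def A_def by auto
  qed
  have uniq: "\<forall>\<^sub>F \<phi> in nhds 0. \<delta>' \<phi> = \<delta> \<phi>"
    if uh: "\<epsilon>' > 0" "smooth_on (ball 0 \<epsilon>') \<delta>'" "\<delta>' 0 = d0" "\<forall>\<phi>\<in>ball 0 \<epsilon>'. F (\<delta>' \<phi>) \<phi> = 0" for \<epsilon>' \<delta>'
  proof -
    obtain D where D0: "\<forall>x\<in>ball 0 \<epsilon>'. D 0 x = \<delta>' x"
      and DD: "\<forall>k. \<forall>x\<in>ball 0 \<epsilon>'. (D k has_real_derivative D (Suc k) x) (at x)"
      using uh(2) unfolding smooth_on_def by blast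
    have "isCont (D 0) 0" using DD uh(1) by (metis DERIV_isCont centre_in_ball)
    then have "(D 0 \<longlongrightarrow> d0) (at 0)" using D0 uh by (simp add: isCont_def)
    then obtain s where s: "s > 0" "\<And>x. x \<noteq> 0 \<Longrightarrow> norm (x - 0) < s \<Longrightarrow> norm (D 0 x - d0) < r"
      unfolding LIM_eq using r by metis
    show ?thesis unfolding eventually_nhds_metric
    proof (intro exI[of _ "min s (min \<epsilon> \<epsilon>')"] conjI allI impI)
      show "min s (min \<epsilon> \<epsilon>') > 0" using s \<epsilon> uh by auto
      fix x :: real assume "dist x 0 < min s (min \<epsilon> \<epsilon>')"
      then have x: "\<bar>x\<bar> < s" "\<bar>x\<bar> < \<epsilon>" "\<bar>x\<bar> < \<epsilon>'" by auto
      show "\<delta>' x = \<delta> x"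
      proof (cases "x = 0")
        case True then show ?thesis using uh d00 by simp
      next
        case False
        have "\<bar>\<delta>' x - d0\<bar> \<le> r" using s(2)[OF False] x D0 by auto
        moreover have "F (\<delta>' x) x = 0" using uh(4) x by auto
        ultimately show ?thesis using uR[OF x(2), of "\<delta>' x" "\<delta> x"] dR[OF x(2)] unfolding R_def by auto
      qed
    qed
  qed
  define c where "c = 2 * \<tau> * (real n - 1) * d0 * (real n - 4 + d0)
              / (\<gamma> * (real n + 3 * d0) + \<tau> * (real n - 2) * (real n + 3 * d0 - 4))"
  define K where "K = 4 * \<tau> * (real n - 1) * (real n - 2) / (\<tau> * (real n + 2) * (real n - 2) + \<gamma> * real n)"
  have Kd: "K = 2 * (real n - 1) * d0 / (real n + d0)" unfolding K_def using fac by simp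
  obtain D where D0: "\<forall>x\<in>ball 0 \<epsilon>. D 0 x = \<delta> x"
    and DD: "\<forall>k. \<forall>x\<in>ball 0 \<epsilon>. (D k has_real_derivative D (Suc k) x) (at x)"
    using smooth unfolding smooth_on_def by blast
  have dD1: "(\<delta> has_real_derivative D 1 x) (at x)" if "\<bar>x\<bar> < \<epsilon>" for x
  proof (rule has_field_derivative_transform_within_open[of "D 0" _ x "ball 0 \<epsilon>"])
    show "(D 0 has_real_derivative D 1 x) (at x)" using DD that by (simp add: One_nat_def)
  qed (use that D0 in auto)
  have D10: "D 1 0 = c"
  proof -
    have "D 1 0 = - B (\<delta> 0) 0 0 / A (\<delta> 0) (\<delta> 0) 0" using DERIV_unique[OF dD1 dderiv] \<epsilon> by simp
    also have "\<dots> = - B d0 0 0 / (- a0)" using d00 A0 by simp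
    also have "\<dots> = c"
    proof -
      have Bv: "B d0 0 0 = 2 * \<tau> * (real n - 1) * d0 * (real n + d0) * (real n - 4 + d0)" using fac B_def by simp
      have den: "\<gamma> * (real n + 3 * d0) + \<tau> * (real n - 2) * (real n + 3 * d0 - 4) = (real n + d0) * S" using fac by simp
      have p: "real n + d0 > 0" using N2 d0nn by simp
      have g: "\<And>X P S :: real. P \<noteq> 0 \<Longrightarrow> - (X * P) / (- (P^2 * S)) = X / (P * S)"
        by (simp add: power2_eq_square)
      have "- B d0 0 0 / (- a0) = - ((2 * \<tau> * (real n - 1) * d0 * (real n - 4 + d0)) * (real n + d0)) / (- ((real n + d0)^2 * S))"
        unfolding Bv a0_def by (simp only: ac_simps)
      also have "\<dots> = (2 * \<tau> * (real n - 1) * d0 * (real n - 4 + d0)) / ((real n + d0) * S)"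
        by (rule g) (use p in auto)
      finally show ?thesis unfolding c_def den .
    qed
    finally show ?thesis .
  qed
  have "isCont (D 2) 0" using DD \<epsilon> by (metis DERIV_isCont centre_in_ball)
  then have "(D 2 \<longlongrightarrow> D 2 0) (at 0)" by (simp add: isCont_def)
  then obtain s2 where s2: "s2 > 0" "\<And>x. x \<noteq> 0 \<Longrightarrow> norm (x - 0) < s2 \<Longrightarrow> norm (D 2 x - D 2 0) < 1"
    unfolding LIM_eq by (metis zero_less_one)
  define M where "M = \<bar>D 2 0\<bar> + 1"
  have M: "\<bar>D 2 t\<bar> \<le> M" if "\<bar>t\<bar> < s2" for t
    using s2(2)[of t] that unfolding M_def by (cases "t = 0") auto
  define \<eta> where "\<eta> = min 1 (min \<epsilon> s2)"
  have \<eta>: "\<eta> > 0" "\<eta> \<le> 1" "\<eta> \<le> \<epsilon>" "\<eta> \<le> s2" using \<epsilon> s2 unfolding \<eta>_def by auto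
  have bnd: "\<bar>\<delta> x - (d0 + x * c)\<bar> \<le> M / 2 * x^2" if x: "\<bar>x\<bar> < \<eta>" for x
  proof -
    let ?diff = "\<lambda>m. if m = 0 then \<delta> else D m"
    have "\<exists>t. \<bar>t\<bar> \<le> \<bar>x\<bar> \<and> \<delta> x = (\<Sum>m<2. ?diff m 0 / (fact m) * x ^ m) + ?diff 2 t / (fact 2) * x ^ 2"
    proof (rule Maclaurin_bi_le)
      show "?diff 0 = \<delta>" by simp
      show "\<forall>m t. m < 2 \<and> \<bar>t\<bar> \<le> \<bar>x\<bar> \<longrightarrow> DERIV (?diff m) t :> ?diff (Suc m) t"
      proof (intro allI impI)
        fix m :: nat and t assume h: "m < 2 \<and> \<bar>t\<bar> \<le> \<bar>x\<bar>"
        then have t: "\<bar>t\<bar> < \<epsilon>" using x \<eta> by auto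
        show "DERIV (?diff m) t :> ?diff (Suc m) t"
        proof (cases "m = 0")
          case True then show ?thesis using dD1[OF t] by simp
        next
          case False then have "m = 1" using h by auto
          then show ?thesis using DD t by simp
        qed
      qed
    qed
    then obtain t where t: "\<bar>t\<bar> \<le> \<bar>x\<bar>" and e: "\<delta> x = \<delta> 0 + D 1 0 * x + D 2 t / 2 * x ^ 2"
      by (auto simp: numeral_2_eq_2)
    have "\<bar>D 2 t\<bar> \<le> M" using M[of t] t x \<eta> by auto
    then have "\<bar>D 2 t / 2 * x ^ 2\<bar> \<le> M / 2 * x^2" by (simp add: abs_mult mult_right_mono)
    then show ?thesis using e d00 D10 by (simp add: algebra_simps)
  qed
  have big1: "(\<lambda>\<phi>. \<delta> \<phi> - (d0 + \<phi> * c)) \<in> O[nhds 0](\<lambda>\<phi>. \<phi>^2)"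
  proof (rule bigoI[where c="M/2"])
    show "\<forall>\<^sub>F x in nhds 0. norm (\<delta> x - (d0 + x * c)) \<le> M / 2 * norm (x^2)"
      unfolding eventually_nhds_metric using \<eta> bnd by (auto intro!: exI[of _ \<eta>])
  qed
  define L where "L = \<bar>c\<bar> + M / 2"
  have lip: "\<bar>\<delta> x - d0\<bar> \<le> L * \<bar>x\<bar>" if x: "\<bar>x\<bar> < \<eta>" for x
  proof -
    have "\<bar>\<delta> x - d0\<bar> \<le> \<bar>x * c\<bar> + M / 2 * x^2" using bnd[OF x] by linarith
    also have "M / 2 * x^2 \<le> M / 2 * \<bar>x\<bar>"
    proof -
      have "x^2 = \<bar>x\<bar> * \<bar>x\<bar>" by (simp add: power2_eq_square)
      also have "\<dots> \<le> \<bar>x\<bar> * 1" by (rule mult_left_mono) (use x \<eta> in auto)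
      finally have "x^2 \<le> \<bar>x\<bar>" by simp
      moreover have "M \<ge> 0" unfolding M_def by simp
      ultimately show ?thesis by (simp add: mult_left_mono)
    qed
    finally show ?thesis unfolding L_def by (simp add: abs_mult algebra_simps)
  qed
  have alph_eq: "alpha_cci n x (\<delta> x) - ((real n - 2) - x * K)
      = x * (2 * (real n - 1) * d0 / (real n + d0) - 2 * (real n - 1) * \<delta> x / (real n + \<delta> x))" for x
    unfolding alpha_cci_def Kd by (simp add: algebra_simps)
  define C where "C = 2 * (real n - 1) * real n * L"
  have abnd: "\<bar>alpha_cci n x (\<delta> x) - ((real n - 2) - x * K)\<bar> \<le> C * x^2" if x: "\<bar>x\<bar> < \<eta>" for x
    unfolding alph_eq C_def
  proof (rule frac_diff_bound)
    show "real n \<ge> 2" by (rule N2)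
    show "\<bar>\<delta> x - d0\<bar> \<le> L * \<bar>x\<bar>" by (rule lip[OF x])
    have "\<bar>\<delta> x - d0\<bar> \<le> r" using dr x \<eta> by auto
    then show "1 \<le> real n + \<delta> x" using r N2 d0nn by auto
    show "1 \<le> real n + d0" using N2 d0nn by auto
  qed
  have big2: "(\<lambda>\<phi>. alpha_cci n \<phi> (\<delta> \<phi>) - ((real n - 2) - \<phi> * K)) \<in> O[nhds 0](\<lambda>\<phi>. \<phi>^2)"
  proof (rule bigoI[where c=C])
    show "\<forall>\<^sub>F x in nhds 0. norm (alpha_cci n x (\<delta> x) - ((real n - 2) - x * K)) \<le> C * norm (x^2)"
      unfolding eventually_nhds_metric using \<eta> abnd by (auto intro!: exI[of _ \<eta>])
  qed
  have big3: "(\<lambda>\<phi>. \<tau> * alpha_cci n \<phi> (\<delta> \<phi>) / \<gamma> - ((real n - 2) * \<tau> / \<gamma> - \<phi> * (\<tau> / \<gamma>) * K)) \<in> O[nhds 0](\<lambda>\<phi>. \<phi>^2)"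
  proof (rule bigoI[where c="\<tau> / \<gamma> * C"])
    have e: "\<tau> * alpha_cci n x (\<delta> x) / \<gamma> - ((real n - 2) * \<tau> / \<gamma> - x * (\<tau> / \<gamma>) * K)
       = \<tau> / \<gamma> * (alpha_cci n x (\<delta> x) - ((real n - 2) - x * K))" for x
      by (simp add: algebra_simps diff_divide_distrib add_divide_distrib)
    have hb: "norm (\<tau> / \<gamma> * (alpha_cci n x (\<delta> x) - ((real n - 2) - x * K))) \<le> \<tau> / \<gamma> * C * norm (x^2)" if "\<bar>x\<bar> < \<eta>" for x
    proof -
      have tg: "\<tau> / \<gamma> \<ge> 0" using assms(2,3) by simp
      have "norm (\<tau> / \<gamma> * (alpha_cci n x (\<delta> x) - ((real n - 2) - x * K))) = \<tau> / \<gamma> * \<bar>alpha_cci n x (\<delta> x) - ((real n - 2) - x * K)\<bar>"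
        using tg by (simp only: real_norm_def abs_mult abs_of_nonneg[OF tg])
      also have "\<dots> \<le> \<tau> / \<gamma> * (C * x^2)" by (rule mult_left_mono[OF abnd[OF that] tg])
      finally show ?thesis by (simp add: mult.assoc)
    qed
    show "\<forall>\<^sub>F x in nhds 0. norm (\<tau> * alpha_cci n x (\<delta> x) / \<gamma> - ((real n - 2) * \<tau> / \<gamma> - x * (\<tau> / \<gamma>) * K)) \<le> \<tau> / \<gamma> * C * norm (x^2)"
      unfolding eventually_nhds_metric e
    proof (intro exI[of _ \<eta>] conjI allI impI)
      fix x :: real assume "dist x 0 < \<eta>"
      then show "norm (\<tau> / \<gamma> * (alpha_cci n x (\<delta> x) - ((real n - 2) - x * K))) \<le> \<tau> / \<gamma> * C * norm (x^2)"
        using hb by simp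
    qed (rule \<eta>(1))
  qed
  show ?thesis
    unfolding d0_def[symmetric] Let_def F_def[symmetric] c_def[symmetric] K_def[symmetric]
    using \<epsilon>(1) smooth d00 dF uniq big1 big2 big3
    by (intro exI[of _ \<epsilon>] exI[of _ \<delta>] conjI) auto
qed

end
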